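(* Let $s,t$ be positive integers and $k,l,r$ nonnegative integers. Put $$a=-\frac{l(s+t)+s}{s+t},\qquad b=\frac{k(s+t)+s}{s+t},$$ and define $$P(x)=\left(\frac{x+1}{2}\right)^{k(s+t)+s}J_{l+r}(a,b,x)^{s+t},\qquad Q(x)=\left(\frac{x-1}{2}\right)^{l(s+t)+s}J_{k+r}(-a,-b,x)^{s+t}.$$ Then $\deg(P-Q)\le m$, where $m=(k+l+r)(s+t-1)+s-r-1$.
   Context: For a nonnegative integer $N$ and complex parameters $\alpha,\beta$, the (generalized) Jacobi polynomial is $J_N(\alpha,\beta,x)=\sum_{j=0}^{N}\binom{N+\alpha+\beta+j}{j}\binom{N+\alpha}{N-j}\left(\frac{x-1}{2}\right)^j$, where $\binom{y}{j}=y(y-1)\cdots(y-j+1)/j!$ for arbitrary $y$. Here $a+b=k-l$. The polynomials $P,Q$ have degree $(s+t)(k+l+r)+s$ and $m$ equals this degree minus $k+l+2r+1$; this is the Davenport–Zannier pair for the "odd double brush" weighted tree. *)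

theory Defs
  imports "HOL-Computational_Algebra.Polynomial" Complex_Main
begin

definition jacobi :: "nat \<Rightarrow> complex \<Rightarrow> complex \<Rightarrow> complex poly" where
  "jacobi N \<alpha> \<beta> = (\<Sum>j=0..N.
      smult (((of_nat N + \<alpha> + \<beta> + of_nat j) gchoose j) * ((of_nat N + \<alpha>) gchoose (N - j)))
            ([:-1/2, 1/2:] ^ j))"

end

theory Submission imports Defs begin

lemma smult_as_mult: "smult a p = [:a:] * p" by simp
lemma const_add: "[:a + b:] = [:a:] + ([:b:]::'a::comm_ring_1 poly)" by simp
lemma const_mult: "[:a * b:] = [:a:] * ([:b:]::'a::comm_ring_1 poly)" by simp
lemma const_diff: "[:a - b:] = [:a:] - ([:b:]::'a::comm_ring_1 poly)" by simp

lemma alg_Lw: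
  fixes X w h A B n M z :: "'a::{idom,ring_char_0}"
  assumes "w = h * (X - 1)" "2 * h = 1"
  shows "(X^2 - 1) *
     ((1 + (1 + n)) * ((1 + n) * z * h * h)) +
     ((A + B + 2) * X + A - B) *
     ((1 + (1 + n)) * (w * z) * h) -
     M * (M + A + B + 1) * (w * (w * z)) =
     ((1 + (1 + n)) * (1 + (1 + n) + A + B + 1) -
      M * (M + A + B + 1)) *
     (w * (w * z)) +
     (1 + (1 + n)) * (1 + (1 + n) + A) *
     (w * z)"
  using assms by algebra

definition Lop :: "complex \<Rightarrow> complex \<Rightarrow> nat \<Rightarrow> complex poly \<Rightarrow> complex poly" where
  "Lop \<alpha> \<beta> N p = ([:0,1:]^2 - 1) * pderiv (pderiv p)
     + (([:\<alpha>:] + [:\<beta>:] + 2) * [:0,1:] + [:\<alpha>:] - [:\<beta>:]) * pderiv p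
     - of_nat N * (of_nat N + [:\<alpha>:] + [:\<beta>:] + 1) * p"

lemma Lop_w:
  fixes \<alpha> \<beta> :: complex
  defines "w \<equiv> [:-1/2, 1/2:] :: complex poly"
  shows "Lop \<alpha> \<beta> N (w ^ j) =
     (of_nat j * (of_nat j + [:\<alpha>:] + [:\<beta>:] + 1) - of_nat N * (of_nat N + [:\<alpha>:] + [:\<beta>:] + 1)) * w ^ j
     + (of_nat j * (of_nat j + [:\<alpha>:])) * w ^ (j - 1)"
proof -
  define h :: "complex poly" where "h = [:1/2:]"
  have hw: "w = h * ([:0,1:] - 1)" unfolding w_def h_def by (simp add: one_pCons)
  have h2: "2 * h = 1" unfolding h_def by (simp add: numeral_poly one_pCons)
  have dw: "pderiv w = h" unfolding w_def h_def by (simp add: pderiv_pCons)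
  have dh: "pderiv h = 0" unfolding h_def by simp
  show ?thesis
  proof (cases j)
    case 0 then show ?thesis by (simp add: Lop_def algebra_simps)
  next
    case (Suc i) note j = this
    show ?thesis
    proof (cases i)
      case 0
      then have j1: "j = 1" using j by simp
      have "Lop \<alpha> \<beta> N (w ^ j) = ([:0,1:]^2 - 1) * 0
     + (([:\<alpha>:] + [:\<beta>:] + 2) * [:0,1:] + [:\<alpha>:] - [:\<beta>:]) * h
     - of_nat N * (of_nat N + [:\<alpha>:] + [:\<beta>:] + 1) * w"
        unfolding Lop_def j1 power_one_right dw dh by simp
      then show ?thesis unfolding j1 by (simp only: of_nat_1 power_one_right diff_self_eq_0 power_0 mult_zero_right) (use hw h2 in algebra)
    next
      case (Suc i')
      have d1: "pderiv (w ^ j) = of_nat (Suc (Suc i')) * w ^ (Suc i') * h"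
        unfolding j Suc pderiv_power_Suc dw smult_as_mult of_nat_poly[symmetric] by (rule refl)
      have d2: "pderiv (pderiv (w ^ j)) = of_nat (Suc (Suc i')) * (of_nat (Suc i') * w ^ i' * h * h)"
        unfolding d1 pderiv_mult pderiv_power_Suc dw dh smult_as_mult of_nat_poly[symmetric] pderiv_of_nat
        by (simp only: mult_zero_right add_0_left add_0_right mult.assoc mult.left_commute)
      show ?thesis unfolding Lop_def d2 unfolding d1 unfolding j Suc
        by (simp only: power_Suc of_nat_Suc diff_Suc_1) (rule alg_Lw[OF hw h2])
    qed
  qed
qed
lemma Lop_add: "Lop a b N (p + q) = Lop a b N p + Lop a b N q"
  unfolding Lop_def pderiv_add by algebra
lemma Lop_smult: "Lop a b N (smult c p) = smult c (Lop a b N p)"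
  unfolding Lop_def pderiv_smult unfolding smult_as_mult by algebra
lemma Lop_0: "Lop a b N 0 = 0"
  unfolding Lop_def by simp
lemma Lop_sum: "Lop a b N (sum f A) = (\<Sum>x\<in>A. Lop a b N (f x))"
  by (induction A rule: infinite_finite_induct) (auto simp: Lop_0 Lop_add)

lemma Lop_w':
  fixes \<alpha> \<beta> :: complex
  shows "Lop \<alpha> \<beta> N ([:-1/2, 1/2:] ^ j) =
     smult (of_nat j * (of_nat j + \<alpha> + \<beta> + 1) - of_nat N * (of_nat N + \<alpha> + \<beta> + 1)) ([:-1/2, 1/2:] ^ j)
     + smult (of_nat j * (of_nat j + \<alpha>)) ([:-1/2, 1/2:] ^ (j - 1))"
proof -
  have e: "[:of_nat j * (of_nat j + \<alpha> + \<beta> + 1) - of_nat N * (of_nat N + \<alpha> + \<beta> + 1):]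
     = (of_nat j * (of_nat j + [:\<alpha>:] + [:\<beta>:] + 1) - of_nat N * (of_nat N + [:\<alpha>:] + [:\<beta>:] + 1) :: complex poly)"
    by (simp add: of_nat_poly one_pCons)
  have f: "[:of_nat j * (of_nat j + \<alpha>):] = (of_nat j * (of_nat j + [:\<alpha>:]) :: complex poly)"
    by (simp add: of_nat_poly)
  show ?thesis unfolding Lop_w smult_as_mult e f by (rule refl)
qed

lemma jacobi_rec:
  fixes \<alpha> \<beta> :: complex
  assumes "j < N"
  shows "(((of_nat N + \<alpha> + \<beta> + of_nat (Suc j)) gchoose (Suc j)) * ((of_nat N + \<alpha>) gchoose (N - Suc j)))
          * (of_nat (Suc j) * (of_nat (Suc j) + \<alpha>))
       = (of_nat N - of_nat j) * (of_nat N + of_nat j + \<alpha> + \<beta> + 1) *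
         (((of_nat N + \<alpha> + \<beta> + of_nat j) gchoose j) * ((of_nat N + \<alpha>) gchoose (N - j)))"
proof -
  define p where "p = N - Suc j"
  have Np: "N - j = Suc p" "N = p + Suc j" using assms unfolding p_def by auto
  define Y where "Y = of_nat N + \<alpha> + \<beta> + of_nat j"
  define a where "a = of_nat N + \<alpha>"
  have h1: "of_nat (Suc j) * ((Y + 1) gchoose Suc j) = (Y + 1) * (Y gchoose j)"
    by (rule Suc_times_gbinomial)
  have h2: "of_nat (Suc p) * (a gchoose Suc p) = (a - of_nat p) * (a gchoose p)"
    using gbinomial_absorption[of p a] gbinomial_absorb_comp[of a p] by simp
  have ap: "a - of_nat p = of_nat (Suc j) + \<alpha>" unfolding a_def Np(2) by simp
  have Y1: "of_nat N + \<alpha> + \<beta> + of_nat (Suc j) = Y + 1" unfolding Y_def by simp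
  have sp: "of_nat (Suc p) = (of_nat N - of_nat j :: complex)" unfolding Np(2) by simp
  have "((Y + 1) gchoose (Suc j)) * (a gchoose p) * (of_nat (Suc j) * (of_nat (Suc j) + \<alpha>))
      = (of_nat (Suc j) * ((Y + 1) gchoose Suc j)) * ((a - of_nat p) * (a gchoose p))"
    unfolding ap by (simp only: mult_ac)
  also have "\<dots> = (Y + 1) * (Y gchoose j) * (of_nat (Suc p) * (a gchoose Suc p))"
    unfolding h1 h2 by (rule refl)
  also have "\<dots> = (of_nat N - of_nat j) * (Y + 1) * ((Y gchoose j) * (a gchoose Suc p))"
    unfolding sp by (simp only: mult_ac)
  moreover have Y2: "of_nat N + of_nat j + \<alpha> + \<beta> + 1 = Y + 1" unfolding Y_def by simp
  ultimately show ?thesis unfolding Y1 Y2 p_def[symmetric] Np(1) unfolding Y_def[symmetric]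
    unfolding a_def[symmetric] by simp
qed
lemma jacobi_ode:
  fixes \<alpha> \<beta> :: complex
  shows "Lop \<alpha> \<beta> N (jacobi N \<alpha> \<beta>) = 0"
proof -
  define w :: "complex poly" where "w = [:-1/2, 1/2:]"
  define c where "c = (\<lambda>j. ((of_nat N + \<alpha> + \<beta> + of_nat j) gchoose j) * ((of_nat N + \<alpha>) gchoose (N - j)))"
  define e where "e = (\<lambda>j::nat. of_nat j * (of_nat j + \<alpha> + \<beta> + 1) - of_nat N * (of_nat N + \<alpha> + \<beta> + 1) :: complex)"
  define f where "f = (\<lambda>j::nat. of_nat j * (of_nat j + \<alpha>) :: complex)"
  have "Lop \<alpha> \<beta> N (jacobi N \<alpha> \<beta>) = (\<Sum>j=0..N. smult (c j) (Lop \<alpha> \<beta> N (w ^ j)))"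
    unfolding jacobi_def Lop_sum Lop_smult c_def w_def by (rule refl)
  also have "\<dots> = (\<Sum>j=0..N. smult (c j * e j) (w ^ j)) + (\<Sum>j=0..N. smult (c j * f j) (w ^ (j - 1)))"
    unfolding w_def Lop_w' e_def f_def by (simp add: sum.distrib smult_add_right)
  also have "\<dots> = 0"
  proof (cases N)
    case 0
    then show ?thesis by (simp add: e_def f_def)
  next
    case (Suc M)
    have eN: "e N = 0" unfolding e_def by simp
    have f0: "f 0 = 0" unfolding f_def by simp
    have "(\<Sum>j=0..N. smult (c j * e j) (w ^ j)) = (\<Sum>j=0..M. smult (c j * e j) (w ^ j))"
      unfolding Suc sum.atLeast0_atMost_Suc using eN Suc by simp
    moreover have "(\<Sum>j=0..N. smult (c j * f j) (w ^ (j - 1))) = (\<Sum>j=0..M. smult (c (Suc j) * f (Suc j)) (w ^ j))"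
      unfolding Suc sum.atLeast0_atMost_Suc_shift using f0 by simp
    moreover have "(\<Sum>j=0..M. smult (c j * e j) (w ^ j)) + (\<Sum>j=0..M. smult (c (Suc j) * f (Suc j)) (w ^ j)) = 0"
    proof -
      have "c j * e j + c (Suc j) * f (Suc j) = 0" if "j \<le> M" for j
      proof -
        have "c (Suc j) * f (Suc j) = (of_nat N - of_nat j) * (of_nat N + of_nat j + \<alpha> + \<beta> + 1) * c j"
          unfolding c_def f_def by (rule jacobi_rec) (use that Suc in simp)
        then show ?thesis unfolding e_def by (simp add: algebra_simps)
      qed
      then show ?thesis by (simp add: sum.distrib[symmetric] smult_add_left[symmetric])
    qed
    ultimately show ?thesis by simp
  qed
  finally show ?thesis .
qed
lemma jacobi_degree: "degree (jacobi N \<alpha> \<beta>) \<le> N"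
  unfolding jacobi_def
proof (rule degree_sum_le, simp)
  fix j assume "j \<in> {0..N}"
  then have "j \<le> N" by simp
  moreover have "degree ([:-1/2, 1/2:] ^ j :: complex poly) \<le> j"
    using degree_power_le[of "[:-1/2, 1/2:] :: complex poly" j] by simp
  ultimately show "degree (smult (((of_nat N + \<alpha> + \<beta> + of_nat j) gchoose j) * ((of_nat N + \<alpha>) gchoose (N - j))) ([:-1/2, 1/2:] ^ j)) \<le> N"
    by (meson degree_smult_le order_trans)
qed

lemma jacobi_coeff: "coeff (jacobi N \<alpha> \<beta>) N = ((of_nat N + \<alpha> + \<beta> + of_nat N) gchoose N) * (1/2)^N"
proof -
  have c: "coeff ([:-1/2, 1/2:] ^ j :: complex poly) N = (if j = N then (1/2)^N else 0)" if "j \<le> N" for j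
  proof (cases "j = N")
    case True
    have "degree ([:-1/2, 1/2:] ^ N :: complex poly) = N" by (simp add: degree_power_eq)
    then have "coeff ([:-1/2, 1/2:] ^ N :: complex poly) N = lead_coeff ([:-1/2, 1/2:] ^ N :: complex poly)" by simp
    also have "\<dots> = (1/2)^N" unfolding lead_coeff_power by simp
    finally show ?thesis using True by simp
  next
    case False
    have "degree ([:-1/2, 1/2:] ^ j :: complex poly) = j" by (simp add: degree_power_eq)
    then show ?thesis using False that by (simp add: coeff_eq_0)
  qed
  define g where "g = (\<lambda>j. ((of_nat N + \<alpha> + \<beta> + of_nat j) gchoose j) * ((of_nat N + \<alpha>) gchoose (N - j)))"
  have "coeff (jacobi N \<alpha> \<beta>) N = (\<Sum>j=0..N. g j * coeff ([:-1/2, 1/2:] ^ j :: complex poly) N)"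
    unfolding jacobi_def coeff_sum coeff_smult g_def by (rule refl)
  also have "\<dots> = (\<Sum>j=0..N. if j = N then g N * (1/2)^N else 0)"
  proof (rule sum.cong[OF refl])
    fix j assume "j \<in> {0..N}"
    then have "j \<le> N" by simp
    from c[OF this] show "g j * coeff ([:-1/2, 1/2:] ^ j :: complex poly) N = (if j = N then g N * (1/2)^N else 0)"
      by simp
  qed
  also have "\<dots> = g N * (1/2)^N" by simp
  finally show ?thesis unfolding g_def by simp
qed
lemma H_const:
  fixes a b :: complex and J1 J2 :: "complex poly"
  assumes E1: "Lop a b N1 J1 = 0" and E2: "Lop (-a) (-b) N2 J2 = 0"
    and NN: "of_nat N2 = of_nat N1 + a + b"
  shows "pderiv (([:a:] - [:b:] + ([:a:] + [:b:]) * [:0,1:]) * J1 * J2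
     + ([:0,1:]^2 - 1) * (pderiv J1 * J2 - J1 * pderiv J2)) = 0"
proof -
  have NN': "(of_nat N2 :: complex poly) = of_nat N1 + [:a:] + [:b:]"
    using arg_cong[OF NN, of "\<lambda>x. [:x:]"] by (simp add: of_nat_poly)
  have ma: "[:-a:] = - [:a:]" "[:-b:] = - [:b:]" by simp_all
  have dX: "pderiv [:0, 1:] = (1 :: complex poly)" by (simp add: pderiv_pCons)
  have dc: "pderiv [:c:] = (0 :: complex poly)" for c by simp
  have d1: "pderiv (1 :: complex poly) = 0" by simp
  have dX2: "pderiv ([:0,1:]^2 :: complex poly) = 2 * [:0,1:]"
    unfolding pderiv_power_Suc numeral_2_eq_2 dX by (simp add: of_nat_poly numeral_poly)
  note E1' = E1[unfolded Lop_def] and E2' = E2[unfolded Lop_def ma]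
  show ?thesis
    unfolding pderiv_add pderiv_mult pderiv_diff dX dc dX2 d1
    using E1' E2' NN' by algebra
qed
lemma alg_PQ:
  fixes u v h X a b J1 J2 d1 d2 U V K1 K2 n NA NB :: "'a::{idom,ring_char_0}"
  assumes "u = h * (X + 1)" "v = h * (X - 1)" "2 * h = 1" "NA = n * b" "NB = - (n * a)"
  shows "(u * U * (n * K1 * d1) + J1 * K1 * (NA * U * h)) * (v * V * (J2 * K2)) -
     u * U * (J1 * K1) * (v * V * (n * K2 * d2) + J2 * K2 * (NB * V * h)) =
     n * h * h * (((a - b + (a + b) * X) * J1 * J2 + (X^2 - 1) * (d1 * J2 - J1 * d2)) * (U * V * K1 * K2))"
  using assms by algebra

lemma PQ_deriv:
  fixes J1 J2 :: "complex poly" and a b :: complex and A' B' n' :: nat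
  assumes hA: "of_nat (Suc A') = of_nat (Suc n') * b" and hB: "of_nat (Suc B') = - (of_nat (Suc n') * a)"
  shows "pderiv ([:1/2,1/2:]^Suc A' * J1^Suc n') * ([:-1/2,1/2:]^Suc B' * J2^Suc n')
       - ([:1/2,1/2:]^Suc A' * J1^Suc n') * pderiv ([:-1/2,1/2:]^Suc B' * J2^Suc n')
       = smult (of_nat (Suc n') / 4) ((([:a:] - [:b:] + ([:a:]+[:b:])*[:0,1:]) * J1 * J2
           + ([:0,1:]^2 - 1) * (pderiv J1 * J2 - J1 * pderiv J2))
          * ([:1/2,1/2:]^A' * [:-1/2,1/2:]^B' * J1^n' * J2^n'))"
proof -
  define u :: "complex poly" where "u = [:1/2,1/2:]"
  define v :: "complex poly" where "v = [:-1/2,1/2:]"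
  define h :: "complex poly" where "h = [:1/2:]"
  define X :: "complex poly" where "X = [:0,1:]"
  have hu: "u = h * (X + 1)" unfolding u_def h_def X_def by (simp add: one_pCons)
  have hv: "v = h * (X - 1)" unfolding v_def h_def X_def by (simp add: one_pCons)
  have h2: "2 * h = 1" unfolding h_def by (simp add: numeral_poly one_pCons)
  have du: "pderiv u = h" unfolding u_def h_def by (simp add: pderiv_pCons)
  have dv: "pderiv v = h" unfolding v_def h_def by (simp add: pderiv_pCons)
  have pA: "(of_nat (Suc A') :: complex poly) = of_nat (Suc n') * [:b:]"
    using arg_cong[OF hA, of "\<lambda>x. [:x:]"] by (simp add: of_nat_poly)
  have pB: "(of_nat (Suc B') :: complex poly) = - (of_nat (Suc n') * [:a:])"
    using arg_cong[OF hB, of "\<lambda>x. [:x:]"] by (simp add: of_nat_poly)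
  have c4: "[:of_nat (Suc n') / 4:] = (of_nat (Suc n') * h * h :: complex poly)"
    unfolding h_def by (simp add: of_nat_poly)
  show ?thesis
    unfolding u_def[symmetric] v_def[symmetric] X_def[symmetric]
    unfolding pderiv_mult pderiv_power_Suc du dv
    unfolding smult_as_mult of_nat_poly[symmetric] c4
    unfolding power_Suc
    by (rule alg_PQ[OF hu hv h2 pA pB])
qed
lemma lc_pderiv:
  fixes R :: "complex poly"
  assumes "degree R > 0"
  shows "degree (pderiv R) = degree R - 1" "coeff (pderiv R) (degree R - 1) = of_nat (degree R) * lead_coeff R"
  using assms by (simp_all add: degree_pderiv coeff_pderiv)

lemma wronski_deg:
  fixes R Q :: "complex poly"
  assumes R0: "R \<noteq> 0" and dQ: "degree Q \<ge> 1" and ne: "degree R \<noteq> degree Q"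
  shows "degree R + degree Q - 1 \<le> degree (pderiv R * Q - R * pderiv Q)"
proof -
  define e where "e = degree R"
  define d where "d = degree Q"
  have Q0: "Q \<noteq> 0" using dQ by auto
  have c1: "coeff (pderiv R * Q) (e + d - 1) = of_nat e * lead_coeff R * lead_coeff Q"
  proof (cases "e = 0")
    case True
    then have "pderiv R = 0" unfolding e_def by (simp add: pderiv_eq_0_iff)
    then show ?thesis using True by simp
  next
    case False
    then have "degree R > 0" unfolding e_def by simp
    note L = lc_pderiv[OF this]
    have "coeff (pderiv R * Q) (degree (pderiv R) + degree Q) = lead_coeff (pderiv R) * lead_coeff Q"
      by (rule coeff_mult_degree_sum)
    moreover have "degree (pderiv R) + degree Q = e + d - 1" using L False dQ unfolding e_def d_def by simp
    ultimately show ?thesis using L unfolding e_def by simp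
  qed
  have c2: "coeff (R * pderiv Q) (e + d - 1) = lead_coeff R * (of_nat d * lead_coeff Q)"
  proof -
    have "degree Q > 0" using dQ by simp
    note L = lc_pderiv[OF this]
    have "coeff (R * pderiv Q) (degree R + degree (pderiv Q)) = lead_coeff R * lead_coeff (pderiv Q)"
      by (rule coeff_mult_degree_sum)
    moreover have "degree R + degree (pderiv Q) = e + d - 1" using L dQ unfolding e_def d_def by simp
    ultimately show ?thesis using L unfolding d_def by simp
  qed
  have "coeff (pderiv R * Q - R * pderiv Q) (e + d - 1) = (of_nat e - of_nat d) * lead_coeff R * lead_coeff Q"
    unfolding coeff_diff c1 c2 by (simp add: algebra_simps)
  moreover have "(of_nat e - of_nat d :: complex) \<noteq> 0" using ne unfolding e_def d_def by simp
  ultimately have "coeff (pderiv R * Q - R * pderiv Q) (e + d - 1) \<noteq> 0" using R0 Q0 by simp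
  then show ?thesis unfolding e_def d_def by (rule le_degree)
qed
theorem mainTheorem5:
  fixes s t k l r :: nat
  assumes "s > 0" and "t > 0"
  defines "a \<equiv> - (of_nat (l * (s + t) + s) / of_nat (s + t) :: complex)"
      and "b \<equiv> (of_nat (k * (s + t) + s) / of_nat (s + t) :: complex)"
  defines "P \<equiv> [:1/2, 1/2:] ^ (k * (s + t) + s) * (jacobi (l + r) a b) ^ (s + t)"
      and "Q \<equiv> [:-1/2, 1/2:] ^ (l * (s + t) + s) * (jacobi (k + r) (-a) (-b)) ^ (s + t)"
  shows "int (degree (P - Q)) \<le>
           int (k + l + r) * (int s + int t - 1) + int s - int r - 1"
proof -
  define n where "n = s + t"
  define n' where "n' = n - 1"
  define A' where "A' = k * n + s - 1"
  define B' where "B' = l * n + s - 1"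
  have nS: "n = Suc n'" unfolding n'_def n_def using assms(2) by simp
  have AS: "k * n + s = Suc A'" unfolding A'_def using assms(1) by simp
  have BS: "l * n + s = Suc B'" unfolding B'_def using assms(1) by simp
  define J1 where "J1 = jacobi (l + r) a b"
  define J2 where "J2 = jacobi (k + r) (-a) (-b)"
  define u :: "complex poly" where "u = [:1/2, 1/2:]"
  define v :: "complex poly" where "v = [:-1/2, 1/2:]"
  have P': "P = u ^ Suc A' * J1 ^ Suc n'" unfolding P_def u_def J1_def n_def[symmetric] AS unfolding nS by (rule refl)
  have Q': "Q = v ^ Suc B' * J2 ^ Suc n'" unfolding Q_def v_def J2_def n_def[symmetric] BS unfolding nS by (rule refl)
  have "n \<noteq> 0" unfolding n_def using assms(2) by simp
  then have n0: "(of_nat n :: complex) \<noteq> 0" by (metis of_nat_eq_0_iff)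
  have ha: "a = - (of_nat (l * n + s) / of_nat n)" unfolding a_def n_def by (rule refl)
  have hb: "b = of_nat (k * n + s) / of_nat n" unfolding b_def n_def by (rule refl)
  have ab: "a + b = of_nat k - of_nat l"
    unfolding ha hb using n0 by (simp add: field_simps)
  have hA: "of_nat (Suc A') = of_nat (Suc n') * b"
    unfolding AS[symmetric] nS[symmetric] hb using n0 by simp
  have hB: "of_nat (Suc B') = - (of_nat (Suc n') * a)"
    unfolding BS[symmetric] nS[symmetric] ha using n0 by simp
  have E1: "Lop a b (l + r) J1 = 0" unfolding J1_def by (rule jacobi_ode)
  have E2: "Lop (-a) (-b) (k + r) J2 = 0" unfolding J2_def by (rule jacobi_ode)
  have NN: "of_nat (k + r) = of_nat (l + r) + a + b" using ab by (simp add: algebra_simps)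
  define H where "H = ([:a:] - [:b:] + ([:a:] + [:b:]) * [:0,1:]) * J1 * J2
     + ([:0,1:]^2 - 1) * (pderiv J1 * J2 - J1 * pderiv J2)"
  have "pderiv H = 0" unfolding H_def by (rule H_const[OF E1 E2 NN])
  then have "degree H = 0" by (simp add: pderiv_eq_0_iff)
  then obtain c where Hc: "H = [:c:]" by (metis degree_eq_zeroE)
  define M where "M = u ^ A' * v ^ B' * J1 ^ n' * J2 ^ n'"
  have W: "pderiv P * Q - P * pderiv Q = smult (of_nat (Suc n') / 4) (H * M)"
    unfolding P' Q' H_def M_def u_def v_def by (rule PQ_deriv[OF hA hB])
  have dJ1: "degree J1 \<le> l + r" unfolding J1_def by (rule jacobi_degree)
  have dJ2: "degree J2 \<le> k + r" unfolding J2_def by (rule jacobi_degree)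
  have du: "degree u = 1" unfolding u_def by simp
  have dv: "degree v = 1" unfolding v_def by simp
  have dM: "degree M \<le> A' + B' + n' * (l + r) + n' * (k + r)"
  proof -
    have "degree M \<le> degree (u ^ A') + degree (v ^ B') + degree (J1 ^ n') + degree (J2 ^ n')"
      unfolding M_def by (meson degree_mult_le order_trans add_mono order_refl)
    also have "\<dots> \<le> degree u * A' + degree v * B' + degree J1 * n' + degree J2 * n'"
      by (intro add_mono degree_power_le)
    also have "\<dots> \<le> A' + B' + n' * (l + r) + n' * (k + r)"
      unfolding du dv using mult_le_mono1[OF dJ1, of n'] mult_le_mono1[OF dJ2, of n'] by (simp only: mult.commute mult_1_right add_mono)
    finally show ?thesis .
  qed
  have dW: "degree (pderiv P * Q - P * pderiv Q) \<le> A' + B' + n' * (l + r) + n' * (k + r)"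
    unfolding W Hc using dM
    by (metis degree_smult_le mult_smult_left order_trans smult_as_mult)
  define G where "G = (of_nat ((k + l + 2 * r) choose (l + r)) :: complex)"
  have G0: "G \<noteq> 0" unfolding G_def by simp
  have cJ1: "coeff J1 (l + r) = G * (1/2) ^ (l + r)"
  proof -
    have e: "of_nat (l + r) + a + b + of_nat (l + r) = (of_nat (k + l + 2 * r) :: complex)"
      using ab by (simp add: algebra_simps)
    show ?thesis unfolding J1_def jacobi_coeff e G_def binomial_gbinomial by (rule refl)
  qed
  have cJ2: "coeff J2 (k + r) = G * (1/2) ^ (k + r)"
  proof -
    have e: "of_nat (k + r) + - a + - b + of_nat (k + r) = (of_nat (k + l + 2 * r) :: complex)"
      using ab by (simp add: algebra_simps)
    have bs: "(k + l + 2 * r) choose (l + r) = (k + l + 2 * r) choose (k + r)"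
      using binomial_symmetric[of "k + r" "k + l + 2 * r"] by (simp add: add.commute)
    show ?thesis unfolding J2_def jacobi_coeff e G_def bs binomial_gbinomial by (rule refl)
  qed
  have dJ1': "degree J1 = l + r"
    using dJ1 le_degree[of J1 "l + r"] cJ1 G0 by simp
  have dJ2': "degree J2 = k + r"
    using dJ2 le_degree[of J2 "k + r"] cJ2 G0 by simp
  have J10: "J1 \<noteq> 0" using cJ1 G0 by auto
  have J20: "J2 \<noteq> 0" using cJ2 G0 by auto
  have u0: "u \<noteq> 0" and v0: "v \<noteq> 0" using du dv by auto
  define D where "D = Suc A' + Suc n' * (l + r)"
  have DQ: "D = Suc B' + Suc n' * (k + r)"
    unfolding D_def AS[symmetric] BS[symmetric] nS[symmetric] by (simp add: algebra_simps)
  have degP: "degree P = D" unfolding P' D_def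
    using u0 J10 by (simp add: degree_mult_eq degree_power_eq du dJ1')
  have degQ: "degree Q = D" unfolding Q' DQ
    using v0 J20 by (simp add: degree_mult_eq degree_power_eq dv dJ2')
  have lu: "lead_coeff u = 1/2" unfolding u_def by simp
  have lv: "lead_coeff v = 1/2" unfolding v_def by simp
  have lP: "lead_coeff P = G ^ Suc n' * (1/2) ^ D"
    unfolding P' lead_coeff_mult lead_coeff_power lu D_def
    using cJ1 dJ1' by (simp add: power_mult_distrib power_add power_mult[symmetric] mult_ac distrib_left distrib_right)
  have lQ: "lead_coeff Q = G ^ Suc n' * (1/2) ^ D"
    unfolding Q' lead_coeff_mult lead_coeff_power lv DQ
    using cJ2 dJ2' by (simp add: power_mult_distrib power_add power_mult[symmetric] mult_ac distrib_left distrib_right)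
  define R where "R = P - Q"
  have D1: "D \<ge> 1" unfolding D_def by simp
  show ?thesis
  proof (cases "R = 0")
    case True
    have "int r \<le> int (k + l + r) * (int s + int t - 1)"
    proof -
      have "int r \<le> int (k + l + r) * 1" by simp
      also have "\<dots> \<le> int (k + l + r) * (int s + int t - 1)"
        using assms by (intro mult_left_mono) simp_all
      finally show ?thesis .
    qed
    then show ?thesis using True assms unfolding R_def by simp
  next
    case False
    have "degree R \<le> D" unfolding R_def using degree_diff_le[of P D Q] degP degQ by simp
    moreover have "coeff R D = 0" unfolding R_def coeff_diff using lP lQ degP degQ by simp
    ultimately have eD: "degree R < D" using False
      by (metis le_neq_implies_less leading_coeff_0_iff)
    have "degree R + degree Q - 1 \<le> degree (pderiv R * Q - R * pderiv Q)"
      by (rule wronski_deg[OF False]) (use degQ D1 eD in simp_all)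
    moreover have "pderiv R * Q - R * pderiv Q = pderiv P * Q - P * pderiv Q"
      unfolding R_def pderiv_diff by (simp add: algebra_simps)
    ultimately have ineq: "degree R + D - 1 \<le> A' + B' + n' * (l + r) + n' * (k + r)"
      using dW degQ by simp
    have iA: "int A' = int k * (int s + int t) + int s - 1" unfolding A'_def n_def using assms by simp
    have iB: "int B' = int l * (int s + int t) + int s - 1" unfolding B'_def n_def using assms by simp
    have in': "int n' = int s + int t - 1" unfolding n'_def n_def using assms by simp
    have iD: "int D = int k * (int s + int t) + int s + (int s + int t) * (int l + int r)"
      unfolding D_def AS[symmetric] nS[symmetric] n_def by simp
    have "int (degree R) + int D - 1 \<le> int A' + int B' + int n' * (int l + int r) + int n' * (int k + int r)"
    proof -
      have "int (degree R + D - 1) \<le> int (A' + B' + n' * (l + r) + n' * (k + r))"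
        using ineq by (simp only: of_nat_le_iff)
      moreover have "int (degree R + D - 1) = int (degree R) + int D - 1" using D1 by (simp add: of_nat_diff)
      ultimately show ?thesis by simp
    qed
    then have "int (degree R) \<le> int (k + l + r) * (int s + int t - 1) + int s - int r - 1"
      unfolding iA iB in' iD by (simp add: algebra_simps)
    then show ?thesis unfolding R_def .
  qed
qed
end
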